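(* For any $\vec x,\vec y,\vec z,\vec w,\vec u,\vec v,\vec s,\vec t\in\Lambda_G$, $$\det\begin{pmatrix}\vec x\cdot\vec u&\vec x\cdot\vec v&\vec x\cdot\vec s&\vec x\cdot\vec t\\ \vec y\cdot\vec u&\vec y\cdot\vec v&\vec y\cdot\vec s&\vec y\cdot\vec t\\ \vec z\cdot\vec u&\vec z\cdot\vec v&\vec z\cdot\vec s&\vec z\cdot\vec t\\ \vec w\cdot\vec u&\vec w\cdot\vec v&\vec w\cdot\vec s&\vec w\cdot\vec t\end{pmatrix}=0\quad\text{in }\kappa G^\#.$$
   Context: Let $\kappa$ be a field of characteristic $0$ and $G$ a group. Let $*:\kappa G\to\kappa G$ be the $\kappa$-linear map with $g^*=g^{-1}$, $(\kappa G)^*$ its fixed points, and $A_G$ the quotient of $\kappa G$ by the two-sided ideal generated by all $ab-ba$, $a\in\kappa G$, $b\in(\kappa G)^*$; $*$ descends to $A_G$. Let $\kappa G^\#=\{x\in A_G:x^*=x\}$ and $\Lambda_G=\{x\in A_G:x^*=-x\}$. For $\vec x,\vec y\in\Lambda_G$ define $\vec x\cdot\vec y=-\tfrac12(\vec x\vec y+\vec y\vec x)\in\kappa G^\#$. *)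

theory Defs
  imports "HOL-Library.Poly_Mapping" "HOL-Combinatorics.Permutations"
begin

text \<open>Group algebra kappa G: finitely supported functions G -> kappa, with
  convolution product.  The (possibly non-abelian) group G is a type of class
  group_add (written additively: g + h is the group product, - g the inverse,
  0 the identity).  single g c is the element c g of kappa G.\<close>

type_synonym ('g, 'k) grpalg = "'g \<Rightarrow>\<^sub>0 'k"

definition star :: "('g::group_add, 'k::field_char_0) grpalg \<Rightarrow> ('g, 'k) grpalg" where
  "star x = (\<Sum>g\<in>Poly_Mapping.keys x. Poly_Mapping.single (- g) (Poly_Mapping.lookup x g))"

definition scal :: "'k::field_char_0 \<Rightarrow> ('g::group_add, 'k) grpalg \<Rightarrow> ('g, 'k) grpalg" where
  "scal c x = Poly_Mapping.map (\<lambda>a. c * a) x"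

text \<open>A_G is the quotient of kappa G by this ideal; elements of A_G are represented
  by elements of kappa G, and equality in A_G is congruence modulo AG_ideal.\<close>
inductive_set AG_ideal :: "('g::group_add, 'k::field_char_0) grpalg set" where
  gen: "star b = b \<Longrightarrow> a * b - b * a \<in> AG_ideal"
| zero: "0 \<in> AG_ideal"
| add: "x \<in> AG_ideal \<Longrightarrow> y \<in> AG_ideal \<Longrightarrow> x + y \<in> AG_ideal"
| mult: "x \<in> AG_ideal \<Longrightarrow> r * x * s \<in> AG_ideal"

text \<open>x represents an element of Lambda_G: x* = -x in A_G.\<close>
definition in_Lambda :: "('g::group_add, 'k::field_char_0) grpalg \<Rightarrow> bool" where
  "in_Lambda x \<longleftrightarrow> star x + x \<in> AG_ideal"

definition dot :: "('g::group_add, 'k::field_char_0) grpalg \<Rightarrow> ('g, 'k) grpalg \<Rightarrow> ('g, 'k) grpalg" where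
  "dot x y = scal (- 1 / 2) (x * y + y * x)"

text \<open>Leibniz determinant of a 4x4 matrix (indices 0..3), products taken in
  row order (entries of the matrices considered commute in A_G).\<close>
definition det4 :: "(nat \<Rightarrow> nat \<Rightarrow> 'a::ring_1) \<Rightarrow> 'a" where
  "det4 M = (\<Sum>p\<in>{p. p permutes {0..<4::nat}}.
      of_int (sign p) * (M 0 (p 0) * M 1 (p 1) * M 2 (p 2) * M 3 (p 3)))"

end

theory Submission
  imports Defs
begin


definition central :: "'a::ring_1 \<Rightarrow> bool" where "central c \<longleftrightarrow> (\<forall>r. c*r = r*c)"
definition anti :: "'a::ring_1 \<Rightarrow> 'a \<Rightarrow> 'a" where "anti a b = a*b + b*a"
definition com2 :: "'a::ring_1 \<Rightarrow> 'a \<Rightarrow> 'a" where "com2 a b = a*b - b*a"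
definition tau :: "'a::ring_1 \<Rightarrow> 'a \<Rightarrow> 'a \<Rightarrow> 'a" where "tau a b c = a*b*c - c*b*a"
definition A4 :: "'a::ring_1 \<Rightarrow> 'a \<Rightarrow> 'a \<Rightarrow> 'a \<Rightarrow> 'a" where "A4 a b c d = d * tau a b c - tau a b c * d"
definition Cp :: "'a::ring_1 \<Rightarrow> 'a \<Rightarrow> 'a" where "Cp p X = p*X + X*p"
definition Cm :: "'a::ring_1 \<Rightarrow> 'a \<Rightarrow> 'a" where "Cm p X = p*X - X*p"

lemma sw1: "q*p = anti p q - p*(q::'a::ring_1)" by (simp add: anti_def)
lemma sw2: "q*(p*r) = anti p q * r - p*(q*(r::'a::ring_1))" by (simp add: anti_def algebra_simps)
lemma cv1: "central c \<Longrightarrow> p*c = c*(p::'a::ring_1)" by (simp add: central_def)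
lemma cv2: "central c \<Longrightarrow> p*(c*r) = c*(p*(r::'a::ring_1))"
  by (metis cv1 mult.assoc)
lemma nc: "y * (numeral n * r) = numeral n * (y * (r::'a::ring_1))"
  by (metis mult.assoc mult_of_nat_commute of_nat_numeral)
lemma central_num: "central (numeral n :: 'a::ring_1)"
  by (simp add: central_def) (metis mult_of_nat_commute of_nat_numeral)
lemma central_neg: "central c \<Longrightarrow> central (- c :: 'a::ring_1)"
  by (simp add: central_def)
lemma Cp_add: "Cp p (X + Y) = Cp p X + Cp p (Y::'a::ring_1)" by (simp add: Cp_def algebra_simps)
lemma Cp_diff: "Cp p (X - Y) = Cp p X - Cp p (Y::'a::ring_1)" by (simp add: Cp_def algebra_simps)
lemma Cp_minus: "Cp p (- X) = - Cp p (X::'a::ring_1)" by (simp add: Cp_def algebra_simps)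
lemma Cm_add: "Cm p (X + Y) = Cm p X + Cm p (Y::'a::ring_1)" by (simp add: Cm_def algebra_simps)
lemma Cm_diff: "Cm p (X - Y) = Cm p X - Cm p (Y::'a::ring_1)" by (simp add: Cm_def algebra_simps)
lemma Cm_minus: "Cm p (- X) = - Cm p (X::'a::ring_1)" by (simp add: Cm_def algebra_simps)
lemma Cp_c: "central c \<Longrightarrow> Cp p (c * X) = c * Cp p (X::'a::ring_1)"
  unfolding Cp_def by (simp add: cv2 distrib_left mult.assoc)
lemma Cm_c: "central c \<Longrightarrow> Cm p (c * X) = c * Cm p (X::'a::ring_1)"
  unfolding Cm_def by (simp add: cv2 right_diff_distrib mult.assoc)
lemma L1: "Cp w a = anti w a" by (simp add: Cp_def anti_def)

lemma L2: fixes z a b :: "'a::ring_1"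
  assumes h0: "central (anti z a)" and h1: "central (anti z b)" and h2: "central (anti a b)"
  shows "Cm z (com2 a b) = 2 * (anti z a * b - anti z b * a)"
  by (simp add: Cm_def com2_def algebra_simps mult_2 sw1[of a z] sw2[of a z] sw1[of b z] sw2[of b z] sw1[of b a] sw2[of b a] cv1[OF h0, of z] cv2[OF h0, of z] cv1[OF h0, of a] cv2[OF h0, of a] cv1[OF h0, of b] cv2[OF h0, of b] cv1[OF h0, of "anti z b"] cv2[OF h0, of "anti z b"] cv1[OF h0, of "anti a b"] cv2[OF h0, of "anti a b"] cv1[OF h1, of z] cv2[OF h1, of z] cv1[OF h1, of a] cv2[OF h1, of a] cv1[OF h1, of b] cv2[OF h1, of b] cv1[OF h1, of "anti a b"] cv2[OF h1, of "anti a b"] cv1[OF h2, of z] cv2[OF h2, of z] cv1[OF h2, of a] cv2[OF h2, of a] cv1[OF h2, of b] cv2[OF h2, of b])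

lemma L3: fixes y a b c :: "'a::ring_1"
  assumes h0: "central (anti y a)" and h1: "central (anti y b)" and h2: "central (anti y c)" and h3: "central (anti a b)" and h4: "central (anti a c)" and h5: "central (anti b c)"
  shows "Cp y (tau a b c) = anti y a * com2 b c - anti y b * com2 a c + anti y c * com2 a b"
  by (simp add: Cp_def com2_def tau_def algebra_simps mult_2 sw1[of a y] sw2[of a y] sw1[of b y] sw2[of b y] sw1[of c y] sw2[of c y] sw1[of b a] sw2[of b a] sw1[of c a] sw2[of c a] sw1[of c b] sw2[of c b] cv1[OF h0, of y] cv2[OF h0, of y] cv1[OF h0, of a] cv2[OF h0, of a] cv1[OF h0, of b] cv2[OF h0, of b] cv1[OF h0, of c] cv2[OF h0, of c] cv1[OF h0, of "anti y b"] cv2[OF h0, of "anti y b"] cv1[OF h0, of "anti y c"] cv2[OF h0, of "anti y c"] cv1[OF h0, of "anti a b"] cv2[OF h0, of "anti a b"] cv1[OF h0, of "anti a c"] cv2[OF h0, of "anti a c"] cv1[OF h0, of "anti b c"] cv2[OF h0, of "anti b c"] cv1[OF h1, of y] cv2[OF h1, of y] cv1[OF h1, of a] cv2[OF h1, of a] cv1[OF h1, of b] cv2[OF h1, of b] cv1[OF h1, of c] cv2[OF h1, of c] cv1[OF h1, of "anti y c"] cv2[OF h1, of "anti y c"] cv1[OF h1, of "anti a b"] cv2[OF h1, of "anti a b"] cv1[OF h1, of "anti a c"] cv2[OF h1, of "anti a c"] cv1[OF h1, of "anti b c"] cv2[OF h1, of "anti b c"] cv1[OF h2, of y] cv2[OF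 h2, of y] cv1[OF h2, of a] cv2[OF h2, of a] cv1[OF h2, of b] cv2[OF h2, of b] cv1[OF h2, of c] cv2[OF h2, of c] cv1[OF h2, of "anti a b"] cv2[OF h2, of "anti a b"] cv1[OF h2, of "anti a c"] cv2[OF h2, of "anti a c"] cv1[OF h2, of "anti b c"] cv2[OF h2, of "anti b c"] cv1[OF h3, of y] cv2[OF h3, of y] cv1[OF h3, of a] cv2[OF h3, of a] cv1[OF h3, of b] cv2[OF h3, of b] cv1[OF h3, of c] cv2[OF h3, of c] cv1[OF h3, of "anti a c"] cv2[OF h3, of "anti a c"] cv1[OF h3, of "anti b c"] cv2[OF h3, of "anti b c"] cv1[OF h4, of y] cv2[OF h4, of y] cv1[OF h4, of a] cv2[OF h4, of a] cv1[OF h4, of b] cv2[OF h4, of b] cv1[OF h4, of c] cv2[OF h4, of c] cv1[OF h4, of "anti b c"] cv2[OF h4, of "anti b c"] cv1[OF h5, of y] cv2[OF h5, of y] cv1[OF h5, of a] cv2[OF h5, of a] cv1[OF h5, of b] cv2[OF h5, of b] cv1[OF h5, of c] cv2[OF h5, of c])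

lemma L4: fixes x a b c d :: "'a::ring_1"
  assumes h0: "central (anti x a)" and h1: "central (anti x b)" and h2: "central (anti x c)" and h3: "central (anti x d)" and h4: "central (anti a b)" and h5: "central (anti a c)" and h6: "central (anti a d)" and h7: "central (anti b c)" and h8: "central (anti b d)" and h9: "central (anti c d)"
  shows "Cm x (A4 a b c d) = -2 * (anti x a * tau b c d - anti x b * tau a c d + anti x c * tau a b d - anti x d * tau a b c)"
  by (simp add: Cm_def tau_def A4_def algebra_simps mult_2 sw1[of a x] sw2[of a x] sw1[of b x] sw2[of b x] sw1[of c x] sw2[of c x] sw1[of d x] sw2[of d x] sw1[of b a] sw2[of b a] sw1[of c a] sw2[of c a] sw1[of d a] sw2[of d a] sw1[of c b] sw2[of c b] sw1[of d b] sw2[of d b] sw1[of d c] sw2[of d c] cv1[OF h0, of x] cv2[OF h0, of x] cv1[OF h0, of a] cv2[OF h0, of a] cv1[OF h0, of b] cv2[OF h0, of b] cv1[OF h0, of c] cv2[OF h0, of c] cv1[OF h0, of d] cv2[OF h0, of d] cv1[OF h0, of "anti x b"] cv2[OF h0, of "anti x b"] cv1[OF h0, of "anti x c"] cv2[OF h0, of "anti x c"] cv1[OF h0, of "anti x d"] cv2[OF h0, of "anti x d"] cv1[OF h0, of "anti a b"] cv2[OF h0, of "anti a b"] cv1[OF h0, of "anti a c"] cv2[OF h0, of "anti a c"] cv1[OF h0, of "anti a d"] cv2[OF h0, of "anti a d"] cv1[OF h0, of "anti b c"] cv2[OF h0, of "anti b c"] cv1[OF h0, of "anti b d"] cv2[OF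 h0, of "anti b d"] cv1[OF h0, of "anti c d"] cv2[OF h0, of "anti c d"] cv1[OF h1, of x] cv2[OF h1, of x] cv1[OF h1, of a] cv2[OF h1, of a] cv1[OF h1, of b] cv2[OF h1, of b] cv1[OF h1, of c] cv2[OF h1, of c] cv1[OF h1, of d] cv2[OF h1, of d] cv1[OF h1, of "anti x c"] cv2[OF h1, of "anti x c"] cv1[OF h1, of "anti x d"] cv2[OF h1, of "anti x d"] cv1[OF h1, of "anti a b"] cv2[OF h1, of "anti a b"] cv1[OF h1, of "anti a c"] cv2[OF h1, of "anti a c"] cv1[OF h1, of "anti a d"] cv2[OF h1, of "anti a d"] cv1[OF h1, of "anti b c"] cv2[OF h1, of "anti b c"] cv1[OF h1, of "anti b d"] cv2[OF h1, of "anti b d"] cv1[OF h1, of "anti c d"] cv2[OF h1, of "anti c d"] cv1[OF h2, of x] cv2[OF h2, of x] cv1[OF h2, of a] cv2[OF h2, of a] cv1[OF h2, of b] cv2[OF h2, of b] cv1[OF h2, of c] cv2[OF h2, of c] cv1[OF h2, of d] cv2[OF h2, of d] cv1[OF h2, of "anti x d"] cv2[OF h2, of "anti x d"] cv1[OF h2, of "anti a b"] cv2[OF h2, of "anti a b"] cv1[OF h2, of "anti a c"] cv2[OF h2, of "anti a c"] cv1[OF h2, of "anti a d"] cv2[OF h2, of "anti a d"] cv1[OF h2, of "anti b c"] cv2[OF h2, of "anti b c"] cv1[OF h2, of "anti b d"] cv2[OF h2, of "anti b d"] cv1[OF h2, of "anti c d"] cv2[OF h2, of "anti c d"] cv1[OF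 h3, of x] cv2[OF h3, of x] cv1[OF h3, of a] cv2[OF h3, of a] cv1[OF h3, of b] cv2[OF h3, of b] cv1[OF h3, of c] cv2[OF h3, of c] cv1[OF h3, of d] cv2[OF h3, of d] cv1[OF h3, of "anti a b"] cv2[OF h3, of "anti a b"] cv1[OF h3, of "anti a c"] cv2[OF h3, of "anti a c"] cv1[OF h3, of "anti a d"] cv2[OF h3, of "anti a d"] cv1[OF h3, of "anti b c"] cv2[OF h3, of "anti b c"] cv1[OF h3, of "anti b d"] cv2[OF h3, of "anti b d"] cv1[OF h3, of "anti c d"] cv2[OF h3, of "anti c d"] cv1[OF h4, of x] cv2[OF h4, of x] cv1[OF h4, of a] cv2[OF h4, of a] cv1[OF h4, of b] cv2[OF h4, of b] cv1[OF h4, of c] cv2[OF h4, of c] cv1[OF h4, of d] cv2[OF h4, of d] cv1[OF h4, of "anti a c"] cv2[OF h4, of "anti a c"] cv1[OF h4, of "anti a d"] cv2[OF h4, of "anti a d"] cv1[OF h4, of "anti b c"] cv2[OF h4, of "anti b c"] cv1[OF h4, of "anti b d"] cv2[OF h4, of "anti b d"] cv1[OF h4, of "anti c d"] cv2[OF h4, of "anti c d"] cv1[OF h5, of x] cv2[OF h5, of x] cv1[OF h5, of a] cv2[OF h5, of a] cv1[OF h5, of b] cv2[OF h5, of b] cv1[OF h5, of c] cv2[OF h5, of c] cv1[OF h5, of d] cv2[OF h5, of d] cv1[OF h5, of "anti a d"] cv2[OF h5, of "anti a d"] cv1[OF h5, of "anti b c"] cv2[OF h5, of "anti b c"] cv1[OF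 h5, of "anti b d"] cv2[OF h5, of "anti b d"] cv1[OF h5, of "anti c d"] cv2[OF h5, of "anti c d"] cv1[OF h6, of x] cv2[OF h6, of x] cv1[OF h6, of a] cv2[OF h6, of a] cv1[OF h6, of b] cv2[OF h6, of b] cv1[OF h6, of c] cv2[OF h6, of c] cv1[OF h6, of d] cv2[OF h6, of d] cv1[OF h6, of "anti b c"] cv2[OF h6, of "anti b c"] cv1[OF h6, of "anti b d"] cv2[OF h6, of "anti b d"] cv1[OF h6, of "anti c d"] cv2[OF h6, of "anti c d"] cv1[OF h7, of x] cv2[OF h7, of x] cv1[OF h7, of a] cv2[OF h7, of a] cv1[OF h7, of b] cv2[OF h7, of b] cv1[OF h7, of c] cv2[OF h7, of c] cv1[OF h7, of d] cv2[OF h7, of d] cv1[OF h7, of "anti b d"] cv2[OF h7, of "anti b d"] cv1[OF h7, of "anti c d"] cv2[OF h7, of "anti c d"] cv1[OF h8, of x] cv2[OF h8, of x] cv1[OF h8, of a] cv2[OF h8, of a] cv1[OF h8, of b] cv2[OF h8, of b] cv1[OF h8, of c] cv2[OF h8, of c] cv1[OF h8, of d] cv2[OF h8, of d] cv1[OF h8, of "anti c d"] cv2[OF h8, of "anti c d"] cv1[OF h9, of x] cv2[OF h9, of x] cv1[OF h9, of a] cv2[OF h9, of a] cv1[OF h9, of b] cv2[OF h9, of b] cv1[OF h9, of c] cv2[OF h9, of c] cv1[OF h9, of d] cv2[OF h9, of d])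



lemma central_of_int: "central (of_int k :: 'a::ring_1)"
  by (simp add: central_def mult_of_int_commute)

lemma chain: fixes x y z w u v s t :: "'a::ring_1"
  assumes h0: "central (anti x u)" and h1: "central (anti x v)" and h2: "central (anti x s)" and h3: "central (anti x t)" and h4: "central (anti y u)" and h5: "central (anti y v)" and h6: "central (anti y s)" and h7: "central (anti y t)" and h8: "central (anti z u)" and h9: "central (anti z v)" and h10: "central (anti z s)" and h11: "central (anti z t)" and h12: "central (anti w u)" and h13: "central (anti w v)" and h14: "central (anti w s)" and h15: "central (anti w t)" and h16: "central (anti u v)" and h17: "central (anti u s)" and h18: "central (anti u t)" and h19: "central (anti v s)" and h20: "central (anti v t)" and h21: "central (anti s t)"
  shows "Cp w (Cm z (Cp y (Cm x (A4 u v s t)))) = -2 * (anti x u * (anti y v * (2 * (anti z s * anti w t - anti z t * anti w s)) - anti y s * (2 * (anti z v * anti w t - anti z t * anti w v)) + anti y t * (2 * (anti z v * anti w s - anti z s * anti w v))) - anti x v * (anti y u * (2 * (anti z s * anti w t - anti z t * anti w s)) - anti y s * (2 * (anti z u * anti w t - anti z t * anti w u)) + anti y t * (2 * (anti z u * anti w s - anti z s * anti w u))) + anti x s * (anti y u * (2 * (anti z v * anti w t - anti z t * anti w v)) - anti y v * (2 * (anti z u * anti w t - anti z t * anti w u)) + anti y t * (2 * (anti z u * anti w v - anti z v * anti w u))) - anti x t * (anti y u * (2 * (anti z v * anti w s - anti z s * anti w v)) - anti y v * (2 * (anti z u * anti w s - anti z s * anti w u)) + anti y s * (2 * (anti z u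 * anti w v - anti z v * anti w u))))"
  apply (simp only: L4[OF h0 h1 h2 h3 h16 h17 h18 h19 h20 h21] L3[of y v s t, OF h5 h6 h7 h19 h20 h21] L3[of y u s t, OF h4 h6 h7 h17 h18 h21] L3[of y u v t, OF h4 h5 h7 h16 h18 h20] L3[of y u v s, OF h4 h5 h6 h16 h17 h19] L2[of z u v, OF h8 h9 h16] L2[of z u s, OF h8 h10 h17] L2[of z u t, OF h8 h11 h18] L2[of z v s, OF h9 h10 h19] L2[of z v t, OF h9 h11 h20] L2[of z s t, OF h10 h11 h21] Cp_add Cp_diff Cp_minus Cm_add Cm_diff Cm_minus Cp_c Cm_c central_num central_neg h0 h1 h2 h3 h4 h5 h6 h7 h8 h9 h10 h11 h12 h13 h14 h15 h16 h17 h18 h19 h20 h21)  by (simp only: L1)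

lemma det4_expand: "det4 M = M 0 0 * M 1 1 * M 2 2 * M 3 3 - M 0 0 * M 1 1 * M 2 3 * M 3 2 - M 0 0 * M 1 2 * M 2 1 * M 3 3 + M 0 0 * M 1 2 * M 2 3 * M 3 1 + M 0 0 * M 1 3 * M 2 1 * M 3 2 - M 0 0 * M 1 3 * M 2 2 * M 3 1 - M 0 1 * M 1 0 * M 2 2 * M 3 3 + M 0 1 * M 1 0 * M 2 3 * M 3 2 + M 0 1 * M 1 2 * M 2 0 * M 3 3 - M 0 1 * M 1 2 * M 2 3 * M 3 0 - M 0 1 * M 1 3 * M 2 0 * M 3 2 + M 0 1 * M 1 3 * M 2 2 * M 3 0 + M 0 2 * M 1 0 * M 2 1 * M 3 3 - M 0 2 * M 1 0 * M 2 3 * M 3 1 - M 0 2 * M 1 1 * M 2 0 * M 3 3 + M 0 2 * M 1 1 * M 2 3 * M 3 0 + M 0 2 * M 1 3 * M 2 0 * M 3 1 - M 0 2 * M 1 3 * M 2 1 * M 3 0 - M 0 3 * M 1 0 * M 2 1 * M 3 2 + M 0 3 * M 1 0 * M 2 2 * M 3 1 + M 0 3 * M 1 1 * M 2 0 * M 3 2 - M 0 3 * M 1 1 * M 2 2 * M 3 0 - M 0 3 * M 1 2 * M 2 0 * M 3 1 + M 0 3 * M 1 2 * M 2 1 * M 3 0"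
proof -
  have S: "{0..<4::nat} = insert 0 (insert 1 (insert 2 (insert 3 {})))" by auto
  have P0: "{p. p permutes ({}::nat set)} = {id}" by auto
  have SG: "\<And>f. sum f {id::nat\<Rightarrow>nat} = f id" by simp
  show ?thesis
    unfolding det4_def S
    apply (subst sum_over_permutations_insert, simp, simp)+
    apply (simp only: P0 SG comp_id)
    apply (simp only: sign_compose permutation_compose permutation_swap_id sign_swap_id)
    by (simp add: algebra_simps)
qed

lemma R4_eq: fixes x y z w u v s t :: "'a::ring_1"
  shows "(anti x u * (anti y v * (2 * (anti z s * anti w t - anti z t * anti w s)) - anti y s * (2 * (anti z v * anti w t - anti z t * anti w v)) + anti y t * (2 * (anti z v * anti w s - anti z s * anti w v))) - anti x v * (anti y u * (2 * (anti z s * anti w t - anti z t * anti w s)) - anti y s * (2 * (anti z u * anti w t - anti z t * anti w u)) + anti y t * (2 * (anti z u * anti w s - anti z s * anti w u))) + anti x s * (anti y u * (2 * (anti z v * anti w t - anti z t * anti w v)) - anti y v * (2 * (anti z u * anti w t - anti z t * anti w u)) + anti y t * (2 * (anti z u * anti w v - anti z v * anti w u))) - anti x t * (anti y u * (2 * (anti z v * anti w s - anti z s * anti w v)) - anti y v * (2 * (anti z u * anti w s - anti z s * anti w u)) + anti y s * (2 * (anti z u * anti w v - anti z v * anti w u)))) = 2 * det4 (\<lambda>i j. anti ([x,y,z,w]!i) ([u,v,s,t]!j))"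
  unfolding det4_expand
  by (simp add: algebra_simps nc[of "anti x u"] nc[of "anti x v"] nc[of "anti x s"] nc[of "anti x t"] nc[of "anti y u"] nc[of "anti y v"] nc[of "anti y s"] nc[of "anti y t"] nc[of "anti z u"] nc[of "anti z v"] nc[of "anti z s"] nc[of "anti z t"] nc[of "anti w u"] nc[of "anti w v"] nc[of "anti w s"] nc[of "anti w t"])

lemma det4_anti: fixes x y z w u v s t :: "'a::ring_1"
  assumes h0: "central (anti x u)" and h1: "central (anti x v)" and h2: "central (anti x s)" and h3: "central (anti x t)" and h4: "central (anti y u)" and h5: "central (anti y v)" and h6: "central (anti y s)" and h7: "central (anti y t)" and h8: "central (anti z u)" and h9: "central (anti z v)" and h10: "central (anti z s)" and h11: "central (anti z t)" and h12: "central (anti w u)" and h13: "central (anti w v)" and h14: "central (anti w s)" and h15: "central (anti w t)" and h16: "central (anti u v)" and h17: "central (anti u s)" and h18: "central (anti u t)" and h19: "central (anti v s)" and h20: "central (anti v t)" and h21: "central (anti s t)"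
  shows "Cp w (Cm z (Cp y (Cm x (A4 u v s t)))) = -4 * det4 (\<lambda>i j. anti ([x,y,z,w]!i) ([u,v,s,t]!j))"
  unfolding chain[OF assms] R4_eq by simp

lemma scale4: assumes "central (h::'a::ring_1)"
  shows "(h*a)*(h*b)*(h*c)*(h*d) = h*h*h*h*(a*b*c*d)"
  by (simp add: mult.assoc cv2[OF assms, of a] cv2[OF assms, of b] cv2[OF assms, of c])

lemma det4_scale: assumes "central (h::'a::ring_1)"
  shows "det4 (\<lambda>i j. h * M i j) = h*h*h*h * det4 M"
  unfolding det4_def sum_distrib_left
  apply (rule sum.cong[OF refl])
  apply (simp only: scale4[OF assms])
  by (simp add: mult.assoc cv2[OF central_of_int, of h])




lemma pm_decomp: "(x::'a \<Rightarrow>\<^sub>0 'b::comm_monoid_add) = (\<Sum>g\<in>Poly_Mapping.keys x. Poly_Mapping.single g (Poly_Mapping.lookup x g))"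
proof (rule poly_mapping_eqI)
  fix k
  show "Poly_Mapping.lookup x k = Poly_Mapping.lookup (\<Sum>g\<in>Poly_Mapping.keys x. Poly_Mapping.single g (Poly_Mapping.lookup x g)) k"
    by (simp add: lookup_sum lookup_single when_def in_keys_iff)
qed

lemma lookup_star: "Poly_Mapping.lookup (star x) h = Poly_Mapping.lookup x (- h)"
proof -
  have "Poly_Mapping.lookup (star x) h = (\<Sum>g\<in>Poly_Mapping.keys x. (Poly_Mapping.lookup x g when - g = h))"
    by (simp add: star_def lookup_sum lookup_single)
  also have "\<dots> = Poly_Mapping.lookup x (- h)"
  proof (cases "- h \<in> Poly_Mapping.keys x")
    case True
    have eq: "\<And>g. (- g = h) \<longleftrightarrow> (g = - h)" by auto
    from True show ?thesis
      by (simp only: when_def eq) (simp add: sum.delta)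
  next
    case False
    then show ?thesis
      by (auto simp: when_def in_keys_iff intro!: sum.neutral)
  qed
  finally show ?thesis .
qed

lemma star_add: "star (x + y) = star x + star y"
  by (rule poly_mapping_eqI) (simp add: lookup_star lookup_add)
lemma star_minus: "star (- x) = - star x"
  by (rule poly_mapping_eqI) (simp add: lookup_star)
lemma star_diff: "star (x - y) = star x - star y"
  by (rule poly_mapping_eqI) (simp add: lookup_star lookup_minus)
lemma star_star: "star (star x) = x"
  by (rule poly_mapping_eqI) (simp add: lookup_star)
lemma star_single: "star (Poly_Mapping.single k a) = Poly_Mapping.single (- k) a"
  by (rule poly_mapping_eqI) (auto simp: lookup_star lookup_single when_def)
lemma star_sum: "star (sum f A) = (\<Sum>a\<in>A. star (f a))"
  by (rule poly_mapping_eqI) (simp add: lookup_star lookup_sum)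

lemma star_mult: "star (x * y) = star y * star (x::('g::group_add, 'k::field_char_0) grpalg)"
proof -
  have "x * y = (\<Sum>g\<in>Poly_Mapping.keys x. \<Sum>h\<in>Poly_Mapping.keys y. Poly_Mapping.single (g + h) (Poly_Mapping.lookup x g * Poly_Mapping.lookup y h))"
    apply (subst pm_decomp[of x], subst pm_decomp[of y])
    apply (simp add: sum_distrib_left sum_distrib_right mult_single)
    by (rule sum.swap)
  hence l: "star (x * y) = (\<Sum>g\<in>Poly_Mapping.keys x. \<Sum>h\<in>Poly_Mapping.keys y. Poly_Mapping.single (- h + - g) (Poly_Mapping.lookup x g * Poly_Mapping.lookup y h))"
    by (simp add: star_sum star_single minus_add)
  have "star y * star x = (\<Sum>h\<in>Poly_Mapping.keys y. \<Sum>g\<in>Poly_Mapping.keys x. Poly_Mapping.single (- h + - g) (Poly_Mapping.lookup y h * Poly_Mapping.lookup x g))"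
    apply (subst pm_decomp[of x], subst pm_decomp[of y])
    apply (simp add: star_sum star_single sum_distrib_left sum_distrib_right mult_single)
    by (rule sum.swap)
  then show ?thesis using l by (simp add: sum.swap[of _ "Poly_Mapping.keys y"] mult.commute)
qed

lemma single0_comm: "Poly_Mapping.single 0 c * x = x * Poly_Mapping.single 0 (c::'k::field_char_0)"
proof -
  have "Poly_Mapping.single 0 c * x = (\<Sum>g\<in>Poly_Mapping.keys x. Poly_Mapping.single g (c * Poly_Mapping.lookup x g))"
    by (subst pm_decomp[of x], simp add: sum_distrib_left mult_single)
  also have "\<dots> = x * Poly_Mapping.single 0 c"
    by (subst (2) pm_decomp[of x], simp add: sum_distrib_right mult_single mult.commute)
  finally show ?thesis .
qed




definition Jset :: "('g::group_add, 'k::field_char_0) grpalg set" where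
  "Jset = (if (1::('g,'k) grpalg) \<in> AG_ideal then {0} else AG_ideal)"

lemma J0: "0 \<in> Jset" by (simp add: Jset_def AG_ideal.zero)
lemma Jadd: "x \<in> Jset \<Longrightarrow> y \<in> Jset \<Longrightarrow> x + y \<in> Jset"
  by (auto simp: Jset_def AG_ideal.add split: if_splits)
lemma Jmult: "x \<in> Jset \<Longrightarrow> r * x * s \<in> Jset"
  by (auto simp: Jset_def AG_ideal.mult split: if_splits)
lemma Jneg: "x \<in> Jset \<Longrightarrow> - x \<in> Jset"
  using Jmult[of x "-1" 1] by simp
lemma Jdiff: "x \<in> Jset \<Longrightarrow> y \<in> Jset \<Longrightarrow> x - y \<in> Jset"
  using Jadd[of x "-y"] Jneg[of y] by simp
lemma Jl: "x \<in> Jset \<Longrightarrow> r * x \<in> Jset"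
  using Jmult[of x r 1] by simp
lemma Jr: "x \<in> Jset \<Longrightarrow> x * s \<in> Jset"
  using Jmult[of x 1 s] by simp
lemma J1: "1 \<notin> Jset"
  by (auto simp: Jset_def)

definition AGrel :: "('g::group_add, 'k::field_char_0) grpalg \<Rightarrow> ('g, 'k) grpalg \<Rightarrow> bool" where
  "AGrel x y \<longleftrightarrow> x - y \<in> Jset"

lemma AGrel_equivp: "equivp AGrel"
proof (rule equivpI)
  show "reflp AGrel" by (rule reflpI) (simp add: AGrel_def J0)
  show "symp AGrel"
  proof (rule sympI)
    fix x y :: "('g::group_add, 'k::field_char_0) grpalg"
    assume "AGrel x y"
    then have "- (x - y) \<in> Jset" unfolding AGrel_def by (rule Jneg)
    then show "AGrel y x" by (simp add: AGrel_def)
  qed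
  show "transp AGrel"
  proof (rule transpI)
    fix x y z :: "('g::group_add, 'k::field_char_0) grpalg"
    assume "AGrel x y" "AGrel y z"
    then have "(x - y) + (y - z) \<in> Jset" unfolding AGrel_def by (rule Jadd)
    then show "AGrel x z" by (simp add: AGrel_def)
  qed
qed

quotient_type (overloaded) ('g, 'k) AGq = "('g::group_add, 'k::field_char_0) grpalg" / AGrel
  by (rule AGrel_equivp)

instantiation AGq :: (group_add, field_char_0) ring_1
begin
lift_definition zero_AGq :: "('a, 'b) AGq" is 0 .
lift_definition one_AGq :: "('a, 'b) AGq" is 1 .
lift_definition plus_AGq :: "('a, 'b) AGq \<Rightarrow> ('a, 'b) AGq \<Rightarrow> ('a, 'b) AGq" is "(+)"
  unfolding AGrel_def by (drule (1) Jadd) (simp add: algebra_simps)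
lift_definition uminus_AGq :: "('a, 'b) AGq \<Rightarrow> ('a, 'b) AGq" is uminus
  unfolding AGrel_def by (drule Jneg) (simp add: algebra_simps)
lift_definition minus_AGq :: "('a, 'b) AGq \<Rightarrow> ('a, 'b) AGq \<Rightarrow> ('a, 'b) AGq" is "(-)"
  unfolding AGrel_def by (drule (1) Jdiff) (simp add: algebra_simps)
lift_definition times_AGq :: "('a, 'b) AGq \<Rightarrow> ('a, 'b) AGq \<Rightarrow> ('a, 'b) AGq" is "(*)"
proof -
  fix a b c d :: "('a, 'b) grpalg"
  assume "AGrel a b" "AGrel c d"
  then have "(a - b) * c + b * (c - d) \<in> Jset"
    unfolding AGrel_def by (intro Jadd Jl Jr)
  moreover have "(a - b) * c + b * (c - d) = a * c - b * d" by (simp add: algebra_simps)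
  ultimately show "AGrel (a * c) (b * d)" by (simp add: AGrel_def)
qed
instance
proof
  fix a b c :: "('a, 'b) AGq"
  show "a * b * c = a * (b * c)" by transfer (simp add: AGrel_def J0 mult.assoc)
  show "1 * a = a" by transfer (simp add: AGrel_def J0)
  show "a * 1 = a" by transfer (simp add: AGrel_def J0)
  show "a + b + c = a + (b + c)" by transfer (simp add: AGrel_def J0 add.assoc)
  show "a + b = b + a" by transfer (simp add: AGrel_def J0 add.commute)
  show "0 + a = a" by transfer (simp add: AGrel_def J0)
  show "- a + a = 0" by transfer (simp add: AGrel_def J0)
  show "a - b = a + - b" by transfer (simp add: AGrel_def J0)
  show "(a + b) * c = a * c + b * c" by transfer (simp add: AGrel_def J0 distrib_right)
  show "a * (b + c) = a * b + a * c" by transfer (simp add: AGrel_def J0 distrib_left)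
  show "(0::('a, 'b) AGq) \<noteq> 1" by transfer (simp add: AGrel_def, metis J1 Jneg minus_minus)
qed
end




lemma q_add: "abs_AGq (a + b) = abs_AGq a + abs_AGq b"
  by (simp add: plus_AGq.abs_eq)
lemma q_mult: "abs_AGq (a * b) = abs_AGq a * abs_AGq b"
  by (simp add: times_AGq.abs_eq)
lemma q_minus: "abs_AGq (- a) = - abs_AGq a"
  by (simp add: uminus_AGq.abs_eq)
lemma q_diff: "abs_AGq (a - b) = abs_AGq a - abs_AGq b"
  by (simp add: minus_AGq.abs_eq)
lemma q_one: "abs_AGq 1 = 1"
  by (simp add: one_AGq_def)
lemma q_zero: "abs_AGq 0 = 0"
  by (simp add: zero_AGq_def)
lemma q_eq_iff: "abs_AGq x = abs_AGq y \<longleftrightarrow> x - y \<in> Jset"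
  by (simp add: AGq.abs_eq_iff AGrel_def)


lemma J_eq: "(1::('g::group_add,'k::field_char_0) grpalg) \<notin> AG_ideal \<Longrightarrow> (Jset::('g,'k) grpalg set) = AG_ideal"
  by (simp add: Jset_def)

lemma q_surj: "\<exists>r'. r = abs_AGq r'"
  by (induct r rule: AGq.abs_induct) auto

lemma crit:
  fixes c :: "('g::group_add,'k::field_char_0) grpalg"
  assumes one: "(1::('g,'k) grpalg) \<notin> AG_ideal" and sc: "abs_AGq (star c) = abs_AGq c"
  shows "central (abs_AGq c)"
  unfolding central_def
proof
  fix r :: "('g,'k) AGq"
  obtain r' where r: "r = abs_AGq r'" using q_surj by blast
  define h :: "('g,'k) grpalg" where "h = Poly_Mapping.single 0 (1/2)"
  define b where "b = h * (c + star c)"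
  define e where "e = h * (c - star c)"
  have sh: "star h = h" by (simp add: h_def star_single)
  have "star b = (star c + c) * h" by (simp add: b_def star_mult star_add star_star sh)
  also have "\<dots> = b" by (simp add: b_def h_def single0_comm add.commute)
  finally have "star b = b" .
  hence g1: "r' * b - b * r' \<in> AG_ideal" by (rule AG_ideal.gen)
  have "star c - c \<in> Jset" using sc by (simp add: q_eq_iff)
  hence "- (star c - c) \<in> Jset" by (rule Jneg)
  hence "e \<in> Jset" unfolding e_def by (intro Jl) simp
  hence g2: "r' * e - e * r' \<in> Jset" by (intro Jdiff Jl Jr)
  have hh: "h + h = 1" by (simp add: h_def flip: single_add)
  have "b + e = (h + h) * c" by (simp add: b_def e_def algebra_simps)
  hence ce: "c = b + e" by (simp add: hh)
  have "(r' * b - b * r') + (r' * e - e * r') \<in> Jset"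
    using g1 g2 J_eq[OF one] by (intro Jadd) auto
  hence "r' * c - c * r' \<in> Jset" by (simp add: ce algebra_simps)
  hence "abs_AGq (c * r') = abs_AGq (r' * c)"
    by (simp add: q_eq_iff) (metis Jneg minus_diff_eq)
  thus "abs_AGq c * r = r * abs_AGq c" by (simp add: r q_mult)
qed

lemma q_star_L:
  fixes a :: "('g::group_add,'k::field_char_0) grpalg"
  assumes one: "(1::('g,'k) grpalg) \<notin> AG_ideal" and "in_Lambda a"
  shows "abs_AGq (star a) = - abs_AGq a"
  using assms by (simp add: in_Lambda_def q_eq_iff J_eq flip: q_minus)

lemma central_anti:
  fixes a b :: "('g::group_add,'k::field_char_0) grpalg"
  assumes one: "(1::('g,'k) grpalg) \<notin> AG_ideal" and "in_Lambda a" "in_Lambda b"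
  shows "central (anti (abs_AGq a) (abs_AGq b))"
proof -
  have "abs_AGq (star (anti a b)) = abs_AGq (anti a b)"
    by (simp add: anti_def star_add star_mult q_add q_mult q_star_L[OF one assms(2)] q_star_L[OF one assms(3)] add.commute)
  hence "central (abs_AGq (anti a b))" by (rule crit[OF one])
  thus ?thesis by (simp add: anti_def q_add q_mult)
qed

lemma central_tau:
  fixes a b c :: "('g::group_add,'k::field_char_0) grpalg"
  assumes one: "(1::('g,'k) grpalg) \<notin> AG_ideal" and "in_Lambda a" "in_Lambda b" "in_Lambda c"
  shows "central (tau (abs_AGq a) (abs_AGq b) (abs_AGq c))"
proof -
  have "abs_AGq (star (tau a b c)) = abs_AGq (tau a b c)"
    by (simp add: tau_def star_diff star_mult q_diff q_mult q_star_L[OF one assms(2)] q_star_L[OF one assms(3)] q_star_L[OF one assms(4)] mult.assoc)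
  hence "central (abs_AGq (tau a b c))" by (rule crit[OF one])
  thus ?thesis by (simp add: tau_def q_diff q_mult)
qed

lemma central_scal: "central (abs_AGq (Poly_Mapping.single 0 (c::'k::field_char_0)) :: ('g::group_add,'k) AGq)"
  unfolding central_def
proof
  fix r :: "('g::group_add,'k::field_char_0) AGq"
  obtain r' where r: "r = abs_AGq r'" using q_surj by blast
  show "abs_AGq (Poly_Mapping.single 0 c) * r = r * abs_AGq (Poly_Mapping.single 0 c)"
    by (simp add: r flip: q_mult) (simp add: single0_comm)
qed

lemma q_sum: "abs_AGq (sum f A) = (\<Sum>a\<in>A. abs_AGq (f a))"
  by (induct A rule: infinite_finite_induct) (simp_all add: q_zero q_add)

lemma q_of_int_sign: "abs_AGq (of_int (sign p)) = of_int (sign p)"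
  by (cases "evenperm p") (simp_all add: sign_def q_one q_minus)

lemma q_det4: "abs_AGq (det4 M) = det4 (\<lambda>i j. abs_AGq (M i j))"
  unfolding det4_def by (simp add: q_sum q_mult q_of_int_sign)


lemma det4_cong: assumes "\<And>i j. i < 4 \<Longrightarrow> j < 4 \<Longrightarrow> M i j = N i j"
  shows "det4 M = det4 N"
  unfolding det4_def
proof (rule sum.cong[OF refl])
  fix p assume "p \<in> {p. p permutes {0..<4::nat}}"
  hence p: "p permutes {0..<4::nat}" by simp
  have "\<And>i. i < 4 \<Longrightarrow> p i < 4" using permutes_in_image[OF p] by auto
  thus "of_int (sign p) * (M 0 (p 0) * M 1 (p 1) * M 2 (p 2) * M 3 (p 3)) =
        of_int (sign p) * (N 0 (p 0) * N 1 (p 1) * N 2 (p 2) * N 3 (p 3))"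
    by (simp add: assms)
qed

lemma q_dot: "abs_AGq (dot a b) = abs_AGq (Poly_Mapping.single 0 (-1/2)) * anti (abs_AGq a) (abs_AGq b)"
proof -
  have "dot a b = Poly_Mapping.single 0 (-1/2) * (a * b + b * a)"
    unfolding dot_def scal_def by (simp add: mult_map_scale_conv_mult[symmetric])
  thus ?thesis by (simp add: q_mult q_add anti_def)
qed

theorem mainTheorem9:
  fixes x y z w u v s t :: "('g::group_add, 'k::field_char_0) grpalg"
  assumes "in_Lambda x" "in_Lambda y" "in_Lambda z" "in_Lambda w"
    and "in_Lambda u" "in_Lambda v" "in_Lambda s" "in_Lambda t"
  shows "det4 (\<lambda>i j. dot ([x, y, z, w] ! i) ([u, v, s, t] ! j)) \<in> AG_ideal"
proof (cases "(1::('g,'k) grpalg) \<in> AG_ideal")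
  case True
  then show ?thesis using AG_ideal.mult[OF True, of "det4 (\<lambda>i j. dot ([x, y, z, w] ! i) ([u, v, s, t] ! j))" 1] by simp
next
  case False
  note one = False
  define D where "D = det4 (\<lambda>i j. anti ([abs_AGq x, abs_AGq y, abs_AGq z, abs_AGq w] ! i) ([abs_AGq u, abs_AGq v, abs_AGq s, abs_AGq t] ! j))"
  have E: "Cp (abs_AGq w) (Cm (abs_AGq z) (Cp (abs_AGq y) (Cm (abs_AGq x) (A4 (abs_AGq u) (abs_AGq v) (abs_AGq s) (abs_AGq t))))) = -4 * D"
    unfolding D_def by (rule det4_anti[OF central_anti[OF one assms(1) assms(5)] central_anti[OF one assms(1) assms(6)] central_anti[OF one assms(1) assms(7)] central_anti[OF one assms(1) assms(8)] central_anti[OF one assms(2) assms(5)] central_anti[OF one assms(2) assms(6)] central_anti[OF one assms(2) assms(7)] central_anti[OF one assms(2) assms(8)] central_anti[OF one assms(3) assms(5)] central_anti[OF one assms(3) assms(6)] central_anti[OF one assms(3) assms(7)] central_anti[OF one assms(3) assms(8)] central_anti[OF one assms(4) assms(5)] central_anti[OF one assms(4) assms(6)] central_anti[OF one assms(4) assms(7)] central_anti[OF one assms(4) assms(8)] central_anti[OF one assms(5) assms(6)] central_anti[OF one assms(5) assms(7)] central_anti[OF one assms(5) assms(8)] central_anti[OF one assms(6) assms(7)] central_anti[OF one assms(6) assms(8)] central_anti[OF one assms(7) assms(8)]])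
  have "central (tau (abs_AGq u) (abs_AGq v) (abs_AGq s))" by (rule central_tau[OF one assms(5) assms(6) assms(7)])
  hence "A4 (abs_AGq u) (abs_AGq v) (abs_AGq s) (abs_AGq t) = 0" by (simp add: A4_def central_def)
  hence "-4 * D = 0" using E by (simp add: Cp_def Cm_def)
  hence D4': "4 * D = 0" by simp
  have "(4::('g,'k) AGq) * D = D + D + D + D" by (simp only: numeral_Bit0 numeral_One distrib_right mult_1_left add.assoc)
  hence D4: "D + D + D + D = 0" using D4' by simp
  define G :: "('g,'k) AGq" where "G = abs_AGq (Poly_Mapping.single 0 (1/4))"
  have "G + G + G + G = abs_AGq (Poly_Mapping.single 0 (1/4 + 1/4 + 1/4 + 1/4))"
    by (simp only: G_def single_add q_add)
  also have "\<dots> = 1" by (simp add: q_one)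
  finally have G4: "G + G + G + G = 1" .
  have "D = (G + G + G + G) * D" by (simp add: G4)
  also have "\<dots> = G * (D + D + D + D)" by (simp add: algebra_simps)
  finally have D0: "D = 0" by (simp add: D4)
  define H :: "('g,'k) AGq" where "H = abs_AGq (Poly_Mapping.single 0 (-1/2))"
  have "abs_AGq (det4 (\<lambda>i j. dot ([x, y, z, w] ! i) ([u, v, s, t] ! j)))
      = det4 (\<lambda>i j. abs_AGq (dot ([x, y, z, w] ! i) ([u, v, s, t] ! j)))" by (rule q_det4)
  also have "\<dots> = det4 (\<lambda>i j. H * anti ([abs_AGq x, abs_AGq y, abs_AGq z, abs_AGq w] ! i) ([abs_AGq u, abs_AGq v, abs_AGq s, abs_AGq t] ! j))"
  proof (rule det4_cong)
    fix i j :: nat assume "i < 4" "j < 4"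
    hence "i = 0 \<or> i = 1 \<or> i = 2 \<or> i = 3" "j = 0 \<or> j = 1 \<or> j = 2 \<or> j = 3" by arith+
    thus "abs_AGq (dot ([x, y, z, w] ! i) ([u, v, s, t] ! j)) = H * anti ([abs_AGq x, abs_AGq y, abs_AGq z, abs_AGq w] ! i) ([abs_AGq u, abs_AGq v, abs_AGq s, abs_AGq t] ! j)"
      by (elim disjE) (simp_all add: q_dot H_def)
  qed
  also have "\<dots> = H * H * H * H * D" unfolding D_def H_def by (rule det4_scale[OF central_scal])
  also have "\<dots> = 0" by (simp add: D0)
  finally have "abs_AGq (det4 (\<lambda>i j. dot ([x, y, z, w] ! i) ([u, v, s, t] ! j))) = abs_AGq 0" by (simp add: q_zero)
  hence "det4 (\<lambda>i j. dot ([x, y, z, w] ! i) ([u, v, s, t] ! j)) \<in> Jset" by (simp add: q_eq_iff)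
  thus ?thesis by (simp add: J_eq[OF one])
qed


end
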